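(* Let $P$ be a finite poset and $\alpha:P\to\mathbb{N}$ an isotone map; for $i\in\mathbb{N}$ let $I_i=\alpha^{-1}(\{0,1,\dots,i\})$. Then the principal letterplace ideal $L(\alpha,P)$ is generated by the monomials $m_\phi=\prod_{j=0}^{i}x_{\phi(j),j}$, where $i\in\mathbb{N}$ and $\phi:\{0<1<\dots<i\}\to P$ is an isotone map with $\phi(i)\in I_i$. The minimal generators of $L(\alpha,P)$ are the $m_\phi$ for such $\phi$ which moreover satisfy $\phi(j)\notin I_j$ for all $j<i$.
   Context: $\mathbb{N}=\{0,1,2,\dots\}$; $\mathrm{Hom}(P,\mathbb{N})$ is the set of isotone maps $P\to\mathbb{N}$ ordered pointwise. The ascent of $\psi\in\mathrm{Hom}(P,\mathbb{N})$ is $\Lambda\psi=\{(p,i)\in P\times\mathbb{N}: \psi(q)\le i<\psi(p)\ \forall q<p\}$. $k$ is a field and $k[x_{P\times\mathbb{N}}]$ the polynomial ring in variables $x_{p,i}$; $m_T=\prod_{t\in T}x_t$. For a poset ideal $\mathcal{J}\subseteq\mathrm{Hom}(P,\mathbb{N})$ with complement $\mathcal{J}^c$, the letterplace ideal $L(\mathcal{J},P)$ is generated by $m_{\Lambda\psi}$, $\psi\in\mathcal{J}^c$. For isotone $\alpha$, $\mathcal{J}(\alpha)=\{\psi\in\mathrm{Hom}(P,\mathbb{N}):\psi\le\alpha\}$ and $L(\alpha,P)=L(\mathcal{J}(\alpha),P)$. *)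

theory Defs
  imports Main "HOL-Library.Poly_Mapping"
begin

text \<open>The polynomial ring k[x_V] over a field k in variables indexed by V is
  modelled as maps from V-indexed exponent vectors to coefficients (finitely supported), with the
  convolution product of HOL-Library.Poly_Mapping.\<close>

type_synonym ('v, 'k) mpoly = "('v \<Rightarrow>\<^sub>0 nat) \<Rightarrow>\<^sub>0 'k"

definition var :: "'v \<Rightarrow> ('v, 'k::comm_ring_1) mpoly" where
  "var v = Poly_Mapping.single (Poly_Mapping.single v 1) 1"

definition monom_of_set :: "'v set \<Rightarrow> ('v, 'k::comm_ring_1) mpoly" where
  "monom_of_set T = (\<Prod>t\<in>T. var t)"

definition monomial :: "('v \<Rightarrow>\<^sub>0 nat) \<Rightarrow> ('v, 'k::comm_ring_1) mpoly" where
  "monomial e = Poly_Mapping.single e 1"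

definition ideal_gen :: "'a::comm_ring_1 set \<Rightarrow> 'a set" where
  "ideal_gen S = {f. \<exists>F r. finite F \<and> F \<subseteq> S \<and> f = (\<Sum>s\<in>F. r s * s)}"

definition min_monomial_gens :: "('v, 'k::comm_ring_1) mpoly set \<Rightarrow> ('v, 'k) mpoly set" where
  "min_monomial_gens I = {monomial e | e. monomial e \<in> I \<and>
      (\<forall>e'. monomial e' \<in> I \<and> (\<forall>v. Poly_Mapping.lookup e' v \<le> Poly_Mapping.lookup e v) \<longrightarrow> e' = e)}"

definition ascent :: "('p::order \<Rightarrow> nat) \<Rightarrow> ('p \<times> nat) set" where
  "ascent \<psi> = {(p, i). i < \<psi> p \<and> (\<forall>q. q < p \<longrightarrow> \<psi> q \<le> i)}"

definition letterplace :: "('p::order \<Rightarrow> nat) set \<Rightarrow> ('p \<times> nat, 'k::comm_ring_1) mpoly set" where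
  "letterplace J = ideal_gen {monom_of_set (ascent \<psi>) | \<psi>. mono \<psi> \<and> \<psi> \<notin> J}"

definition principal_J :: "('p::order \<Rightarrow> nat) \<Rightarrow> ('p \<Rightarrow> nat) set" where
  "principal_J \<alpha> = {\<psi>. mono \<psi> \<and> \<psi> \<le> \<alpha>}"

definition principal_letterplace :: "('p::order \<Rightarrow> nat) \<Rightarrow> ('p \<times> nat, 'k::comm_ring_1) mpoly set" where
  "principal_letterplace \<alpha> = letterplace (principal_J \<alpha>)"

definition m_phi :: "nat \<Rightarrow> (nat \<Rightarrow> 'p) \<Rightarrow> ('p \<times> nat, 'k::comm_ring_1) mpoly" where
  "m_phi i \<phi> = (\<Prod>j\<in>{0..i}. var (\<phi> j, j))"

end

theory Submission
  imports Defs "HOL.Modules"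
begin

interpretation rmod: module "(*) :: 'a::comm_ring_1 \<Rightarrow> 'a \<Rightarrow> 'a"
  by unfold_locales (simp_all add: algebra_simps)

lemma ideal_gen_span: "ideal_gen S = rmod.span S"
  unfolding ideal_gen_def rmod.span_explicit by blast

definition expo :: "'v set \<Rightarrow> ('v \<Rightarrow>\<^sub>0 nat)" where
  "expo T = (\<Sum>t\<in>T. Poly_Mapping.single t 1)"

lemma lookup_expo: "finite T \<Longrightarrow> Poly_Mapping.lookup (expo T) v = (if v \<in> T then 1 else 0)"
  by (simp add: expo_def lookup_sum lookup_single when_def)

lemma monom_expo: "finite T \<Longrightarrow> (monom_of_set T :: ('v,'k::comm_ring_1) mpoly) = monomial (expo T)"
  unfolding monom_of_set_def expo_def monomial_def
  by (induction T rule: finite_induct) (simp_all add: var_def mult_single)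

lemma keys_monomial: "Poly_Mapping.keys (monomial e :: ('v,'k::field) mpoly) = {e}"
  by (simp add: monomial_def)

lemma span_monomial_keys:
  fixes S :: "('v,'k::field) mpoly set"
  assumes "S \<subseteq> {monomial d | d. P d}" "f \<in> rmod.span S" "k \<in> Poly_Mapping.keys f"
  shows "\<exists>d. P d \<and> (\<forall>v. Poly_Mapping.lookup d v \<le> Poly_Mapping.lookup k v)"
proof -
  let ?T = "{f::('v,'k) mpoly. \<forall>k\<in>Poly_Mapping.keys f. \<exists>d. P d \<and> (\<forall>v. Poly_Mapping.lookup d v \<le> Poly_Mapping.lookup k v)}"
  have "rmod.subspace ?T"
  proof (rule rmod.subspaceI)
    show "0 \<in> ?T" by simp
  next
    fix x y assume "x \<in> ?T" "y \<in> ?T"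
    then show "x + y \<in> ?T" using keys_add[of x y] by blast
  next
    fix c x assume x: "x \<in> ?T"
    show "c * x \<in> ?T"
    proof (intro CollectI ballI)
      fix k assume "k \<in> Poly_Mapping.keys (c * x)"
      with keys_mult[of c x] obtain a b where ab: "k = a + b" "b \<in> Poly_Mapping.keys x" by blast
      with x obtain d where "P d" "\<forall>v. Poly_Mapping.lookup d v \<le> Poly_Mapping.lookup b v" by blast
      then show "\<exists>d. P d \<and> (\<forall>v. Poly_Mapping.lookup d v \<le> Poly_Mapping.lookup k v)"
        using ab by (auto simp: lookup_add intro: trans_le_add2)
    qed
  qed
  moreover have "S \<subseteq> ?T"
  proof
    fix x assume "x \<in> S"
    with assms(1) obtain d where "x = monomial d" "P d" by blast
    then show "x \<in> ?T" by (auto simp: keys_monomial)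
  qed
  ultimately have "rmod.span S \<subseteq> ?T" by (rule rmod.span_minimal[rotated])
  then show ?thesis using assms by blast
qed

definition Tphi :: "nat \<Rightarrow> (nat \<Rightarrow> 'p) \<Rightarrow> ('p \<times> nat) set" where
  "Tphi i \<phi> = (\<lambda>j. (\<phi> j, j)) ` {0..i}"

lemma finite_Tphi[simp]: "finite (Tphi i \<phi>)" by (simp add: Tphi_def)

lemma m_phi_monom: "m_phi i \<phi> = monom_of_set (Tphi i \<phi>)"
  unfolding m_phi_def monom_of_set_def Tphi_def
  by (subst prod.reindex) (auto simp: inj_on_def)

lemma m_phi_expo: "(m_phi i \<phi> :: ('p \<times> nat,'k::comm_ring_1) mpoly) = monomial (expo (Tphi i \<phi>))"
  by (simp add: m_phi_monom monom_expo)

lemma finite_ascent[simp]: "finite (ascent (\<psi> :: 'p::{order,finite} \<Rightarrow> nat))"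
proof -
  have "ascent \<psi> \<subseteq> (SIGMA p:UNIV. {..<\<psi> p})" by (auto simp: ascent_def)
  then show ?thesis by (rule finite_subset) (auto intro: finite_SigmaI)
qed

lemma monom_split: "finite B \<Longrightarrow> A \<subseteq> B \<Longrightarrow> monom_of_set B = monom_of_set (B - A) * monom_of_set A"
  unfolding monom_of_set_def by (metis prod.subset_diff)

lemma C1:
  fixes \<alpha> :: "'p::{order,finite} \<Rightarrow> nat"
  assumes mon: "monotone_on {0..i} (\<le>) (\<le>) \<phi>" and ai: "\<alpha> (\<phi> i) \<le> i"
  shows "\<exists>\<psi>. mono \<psi> \<and> \<not> \<psi> \<le> \<alpha> \<and> ascent \<psi> \<subseteq> Tphi i \<phi>"
proof -
  define \<psi> where "\<psi> p = card {j. j \<le> i \<and> \<phi> j \<le> p}" for p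
  have fin: "finite {j. j \<le> i \<and> \<phi> j \<le> p}" for p
    by (rule finite_subset[of _ "{..i}"]) auto
  have m: "mono \<psi>" unfolding mono_def \<psi>_def
    by (intro allI impI card_mono[OF fin]) (auto intro: order_trans)
  have phimono: "\<phi> j \<le> \<phi> j'" if "j \<le> j'" "j' \<le> i" for j j'
    using mon that by (auto simp: monotone_on_def)
  have low: "Suc k \<le> \<psi> (\<phi> k)" if "k \<le> i" for k
  proof -
    have "{0..k} \<subseteq> {j. j \<le> i \<and> \<phi> j \<le> \<phi> k}" using that phimono by auto
    from card_mono[OF fin this] show ?thesis by (simp add: \<psi>_def)
  qed
  have up: "\<phi> k \<le> p \<and> k \<le> i" if "k < \<psi> p" for k p
  proof (rule ccontr)
    assume a: "\<not> (\<phi> k \<le> p \<and> k \<le> i)"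
    have "{j. j \<le> i \<and> \<phi> j \<le> p} \<subseteq> {..<k}"
    proof
      fix j assume j: "j \<in> {j. j \<le> i \<and> \<phi> j \<le> p}"
      show "j \<in> {..<k}"
      proof (rule ccontr)
        assume "j \<notin> {..<k}"
        then have "k \<le> j" by simp
        with j have "k \<le> i" "\<phi> k \<le> p" using phimono[of k j] by (auto intro: order_trans)
        with a show False by simp
      qed
    qed
    then have "\<psi> p \<le> k" using card_mono[of "{..<k}"] by (simp add: \<psi>_def)
    with that show False by simp
  qed
  have "\<not> \<psi> \<le> \<alpha>"
  proof
    assume "\<psi> \<le> \<alpha>"
    then have "\<psi> (\<phi> i) \<le> \<alpha> (\<phi> i)" by (simp add: le_fun_def)
    with low[of i] ai show False by simp
  qed
  moreover have "ascent \<psi> \<subseteq> Tphi i \<phi>"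
  proof
    fix x assume "x \<in> ascent \<psi>"
    then obtain p k where x: "x = (p,k)" "k < \<psi> p" "\<forall>q. q < p \<longrightarrow> \<psi> q \<le> k"
      by (auto simp: ascent_def)
    from up[OF x(2)] have u: "\<phi> k \<le> p" "k \<le> i" by auto
    have "\<phi> k = p"
    proof (rule ccontr)
      assume "\<phi> k \<noteq> p"
      with u have "\<phi> k < p" by simp
      with x(3) have "\<psi> (\<phi> k) \<le> k" by simp
      with low[OF u(2)] show False by simp
    qed
    then show "x \<in> Tphi i \<phi>" using x u by (auto simp: Tphi_def)
  qed
  ultimately show ?thesis using m by blast
qed

lemma M:
  fixes \<psi> :: "'p::{order,finite} \<Rightarrow> nat"
  shows "\<forall>r. card {q. q < r} = n \<longrightarrow> k < \<psi> r \<longrightarrow> (\<exists>m \<le> r. (m,k) \<in> ascent \<psi>)"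
proof (induction n rule: less_induct)
  case (less n)
  show ?case
  proof (intro allI impI)
    fix r assume n: "card {q. q < r} = n" and k: "k < \<psi> r"
    show "\<exists>m \<le> r. (m,k) \<in> ascent \<psi>"
    proof (cases "\<forall>q<r. \<psi> q \<le> k")
      case True then show ?thesis using k by (auto simp: ascent_def)
    next
      case False then obtain q where q: "q < r" "k < \<psi> q" by (auto simp: not_le)
      have "{q'. q' < q} \<subset> {q'. q' < r}" using q(1) by (auto intro: less_trans)
      then have "card {q'. q' < q} < card {q'. q' < r}" by (rule psubset_card_mono[OF finite])
      with less.IH n q(2) obtain m where "m \<le> q" "(m,k) \<in> ascent \<psi>" by blast
      then show ?thesis using q(1) by (meson less_imp_le order_trans)
    qed
  qed
qed

lemma M':
  fixes \<psi> :: "'p::{order,finite} \<Rightarrow> nat"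
  shows "k < \<psi> r \<Longrightarrow> \<exists>m \<le> r. (m,k) \<in> ascent \<psi>"
  using M by blast

lemma C2:
  fixes \<alpha> \<psi> :: "'p::{order,finite} \<Rightarrow> nat"
  assumes "mono \<alpha>" "\<not> \<psi> \<le> \<alpha>"
  shows "\<exists>i \<phi>. monotone_on {0..i} (\<le>) (\<le>) \<phi> \<and> \<alpha> (\<phi> i) \<le> i \<and> Tphi i \<phi> \<subseteq> ascent \<psi>"
proof -
  obtain p where p: "\<alpha> p < \<psi> p" using assms(2) by (auto simp: le_fun_def not_le)
  define i where "i = \<alpha> p"
  have ind: "\<exists>\<phi>. (\<forall>j. i - n \<le> j \<and> j \<le> i \<longrightarrow> (\<phi> j, j) \<in> ascent \<psi>)
     \<and> (\<forall>j. i - n \<le> j \<and> j < i \<longrightarrow> \<phi> j \<le> \<phi> (Suc j)) \<and> \<phi> i \<le> p" if "n \<le> i" for n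
    using that
  proof (induction n)
    case 0
    from M'[of i \<psi> p] p obtain m where "m \<le> p" "(m,i) \<in> ascent \<psi>" by (auto simp: i_def)
    then show ?case by (intro exI[of _ "\<lambda>_. m"]) auto
  next
    case (Suc n)
    then obtain \<phi> where \<phi>: "\<forall>j. i - n \<le> j \<and> j \<le> i \<longrightarrow> (\<phi> j, j) \<in> ascent \<psi>"
      "\<forall>j. i - n \<le> j \<and> j < i \<longrightarrow> \<phi> j \<le> \<phi> (Suc j)" "\<phi> i \<le> p" by auto
    define k where "k = i - Suc n"
    have sk: "Suc k = i - n" "k < i" using Suc.prems by (auto simp: k_def)
    have "(\<phi> (Suc k), Suc k) \<in> ascent \<psi>" using \<phi>(1) sk by auto
    then have "k < \<psi> (\<phi> (Suc k))" by (auto simp: ascent_def)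
    from M'[of k \<psi> "\<phi> (Suc k)", OF this] obtain m where m: "m \<le> \<phi> (Suc k)" "(m,k) \<in> ascent \<psi>" by auto
    have cases: "j = k \<or> i - n \<le> j" if "i - Suc n \<le> j" for j using that sk k_def by linarith
    show ?case
    proof (intro exI[of _ "\<phi>(k := m)"] conjI allI impI)
      fix j assume j: "i - Suc n \<le> j \<and> j \<le> i"
      show "((\<phi>(k := m)) j, j) \<in> ascent \<psi>"
      proof (cases "j = k")
        case True then show ?thesis using m(2) by simp
      next
        case False
        with cases[of j] j have "i - n \<le> j" by blast
        with j \<phi>(1) False show ?thesis by simp
      qed
    next
      fix j assume j: "i - Suc n \<le> j \<and> j < i"
      show "(\<phi>(k := m)) j \<le> (\<phi>(k := m)) (Suc j)"
      proof (cases "j = k")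
        case True then show ?thesis using m(1) by simp
      next
        case False
        with cases[of j] j have jn: "i - n \<le> j" by blast
        then have "Suc j \<noteq> k" using sk by linarith
        with jn j \<phi>(2) False show ?thesis by simp
      qed
    next
      show "(\<phi>(k := m)) i \<le> p" using sk \<phi>(3) by auto
    qed
  qed
  from ind[of i] obtain \<phi> where \<phi>: "\<forall>j. j \<le> i \<longrightarrow> (\<phi> j, j) \<in> ascent \<psi>"
      "\<forall>j. j < i \<longrightarrow> \<phi> j \<le> \<phi> (Suc j)" "\<phi> i \<le> p" by auto
  have chain: "a \<le> b \<longrightarrow> b \<le> i \<longrightarrow> \<phi> a \<le> \<phi> b" for a b
  proof (induction b)
    case 0 then show ?case by simp
  next
    case (Suc b)
    show ?case
    proof (intro impI)
      assume "a \<le> Suc b" "Suc b \<le> i"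
      then show "\<phi> a \<le> \<phi> (Suc b)"
      proof (cases "a = Suc b")
        case False
        with \<open>a \<le> Suc b\<close> have "a \<le> b" by simp
        with Suc.IH \<open>Suc b \<le> i\<close> have "\<phi> a \<le> \<phi> b" by simp
        moreover have "\<phi> b \<le> \<phi> (Suc b)" using \<phi>(2) \<open>Suc b \<le> i\<close> by simp
        ultimately show ?thesis by (rule order_trans)
      qed simp
    qed
  qed
  have "monotone_on {0..i} (\<le>) (\<le>) \<phi>" unfolding monotone_on_def using chain by auto
  moreover have "\<alpha> (\<phi> i) \<le> i" using assms(1) \<phi>(3) by (simp add: i_def monoD)
  moreover have "Tphi i \<phi> \<subseteq> ascent \<psi>" using \<phi>(1) by (auto simp: Tphi_def)
  ultimately show ?thesis by blast
qed

lemma expo_le: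
  assumes "finite A" "finite B"
  shows "(\<forall>v. Poly_Mapping.lookup (expo A) v \<le> Poly_Mapping.lookup (expo B) v) \<longleftrightarrow> A \<subseteq> B"
proof
  assume H: "\<forall>v. Poly_Mapping.lookup (expo A) v \<le> Poly_Mapping.lookup (expo B) v"
  show "A \<subseteq> B"
  proof
    fix v assume "v \<in> A"
    with H[rule_format, of v] show "v \<in> B" using assms by (simp add: lookup_expo split: if_splits)
  qed
qed (use assms in \<open>auto simp: lookup_expo\<close>)

theorem theorem4p7:
  fixes \<alpha> :: "'p::{order, finite} \<Rightarrow> nat"
  assumes "mono \<alpha>"
  defines "I \<equiv> (\<lambda>i::nat. {p. \<alpha> p \<le> i})"
  shows "(principal_letterplace \<alpha> :: ('p \<times> nat, 'k::field) mpoly set) =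
           ideal_gen {m_phi i \<phi> | i \<phi>. monotone_on {0..i} (\<le>) (\<le>) \<phi> \<and> \<phi> i \<in> I i} \<and>
         min_monomial_gens (principal_letterplace \<alpha> :: ('p \<times> nat, 'k::field) mpoly set) =
           {m_phi i \<phi> | i \<phi>. monotone_on {0..i} (\<le>) (\<le>) \<phi> \<and> \<phi> i \<in> I i
               \<and> (\<forall>j<i. \<phi> j \<notin> I j)}"
proof -
  let ?G = "{m_phi i \<phi> | i \<phi>. monotone_on {0..i} (\<le>) (\<le>) \<phi> \<and> \<phi> i \<in> I i} :: ('p \<times> nat, 'k) mpoly set"
  let ?H = "{monom_of_set (ascent \<psi>) | \<psi>. mono \<psi> \<and> \<psi> \<notin> principal_J \<alpha>} :: ('p \<times> nat, 'k) mpoly set"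
  have L: "(principal_letterplace \<alpha> :: ('p \<times> nat, 'k::field) mpoly set) = rmod.span ?H"
    unfolding principal_letterplace_def letterplace_def ideal_gen_span ..
  have HG: "?H \<subseteq> rmod.span ?G"
  proof
    fix x assume "x \<in> ?H"
    then obtain \<psi> where x: "x = monom_of_set (ascent \<psi>)" "mono \<psi>" "\<psi> \<notin> principal_J \<alpha>" by blast
    then have "\<not> \<psi> \<le> \<alpha>" by (simp add: principal_J_def)
    from C2[OF assms(1) this] obtain i \<phi> where ip: "monotone_on {0..i} (\<le>) (\<le>) \<phi>"
      "\<alpha> (\<phi> i) \<le> i" "Tphi i \<phi> \<subseteq> ascent \<psi>" by blast
    have g: "m_phi i \<phi> \<in> ?G" using ip by (auto simp: I_def)
    have "x = monom_of_set (ascent \<psi> - Tphi i \<phi>) * m_phi i \<phi>"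
      using x(1) monom_split[OF finite_ascent ip(3)] by (simp add: m_phi_monom)
    then show "x \<in> rmod.span ?G" using rmod.span_scale[OF rmod.span_base[OF g]] by simp
  qed
  have GH: "?G \<subseteq> rmod.span ?H"
  proof
    fix x assume "x \<in> ?G"
    then obtain i \<phi> where x: "x = m_phi i \<phi>" "monotone_on {0..i} (\<le>) (\<le>) \<phi>" "\<phi> i \<in> I i" by blast
    then have ai: "\<alpha> (\<phi> i) \<le> i" by (simp add: I_def)
    from C1[of i \<phi> \<alpha>, OF x(2) ai] obtain \<psi> where p: "mono \<psi>" "\<not> \<psi> \<le> \<alpha>" "ascent \<psi> \<subseteq> Tphi i \<phi>" by blast
    have g: "monom_of_set (ascent \<psi>) \<in> ?H" using p by (auto simp: principal_J_def)
    have "x = monom_of_set (Tphi i \<phi> - ascent \<psi>) * monom_of_set (ascent \<psi>)"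
      using x(1) monom_split[OF finite_Tphi p(3)] by (simp add: m_phi_monom)
    then show "x \<in> rmod.span ?H" using rmod.span_scale[OF rmod.span_base[OF g]] by simp
  qed
  have eq1: "rmod.span ?H = rmod.span ?G"
    using rmod.span_minimal[OF HG rmod.subspace_span] rmod.span_minimal[OF GH rmod.subspace_span] by blast
  have G_sub: "?G \<subseteq> {monomial d | d. \<exists>i \<phi>. monotone_on {0..i} (\<le>) (\<le>) \<phi> \<and> \<alpha> (\<phi> i) \<le> i \<and> d = expo (Tphi i \<phi>)}"
    by (auto simp: m_phi_expo I_def)
  have key: "\<exists>i \<phi>. monotone_on {0..i} (\<le>) (\<le>) \<phi> \<and> \<alpha> (\<phi> i) \<le> i \<and>
      (\<forall>v. Poly_Mapping.lookup (expo (Tphi i \<phi>)) v \<le> Poly_Mapping.lookup e v)"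
    if "(monomial e :: ('p \<times> nat, 'k) mpoly) \<in> rmod.span ?G" for e
  proof -
    have "e \<in> Poly_Mapping.keys (monomial e :: ('p \<times> nat, 'k) mpoly)" by (simp add: keys_monomial)
    from span_monomial_keys[OF G_sub that this] show ?thesis by blast
  qed
  have part2: "min_monomial_gens (rmod.span ?G) =
           {m_phi i \<phi> | i \<phi>. monotone_on {0..i} (\<le>) (\<le>) \<phi> \<and> \<phi> i \<in> I i
               \<and> (\<forall>j<i. \<phi> j \<notin> I j)}"
  proof (intro set_eqI iffI)
    fix x assume "x \<in> min_monomial_gens (rmod.span ?G)"
    then obtain e where x: "x = monomial e" "monomial e \<in> rmod.span ?G"
      and mi: "\<And>e'. monomial e' \<in> rmod.span ?G \<Longrightarrow> (\<forall>v. Poly_Mapping.lookup e' v \<le> Poly_Mapping.lookup e v) \<Longrightarrow> e' = e"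
      unfolding min_monomial_gens_def by blast
    from key[OF x(2)] obtain i \<phi> where ip: "monotone_on {0..i} (\<le>) (\<le>) \<phi>" "\<alpha> (\<phi> i) \<le> i"
      "\<forall>v. Poly_Mapping.lookup (expo (Tphi i \<phi>)) v \<le> Poly_Mapping.lookup e v" by blast
    define i' where "i' = (LEAST j. \<alpha> (\<phi> j) \<le> j)"
    have i'1: "\<alpha> (\<phi> i') \<le> i'" unfolding i'_def by (rule LeastI[of _ i]) (rule ip(2))
    have i'2: "i' \<le> i" unfolding i'_def by (rule Least_le) (rule ip(2))
    have i'3: "\<not> \<alpha> (\<phi> j) \<le> j" if "j < i'" for j using not_less_Least[OF that[unfolded i'_def]] .
    have mon': "monotone_on {0..i'} (\<le>) (\<le>) \<phi>"
      by (rule monotone_on_subset[OF ip(1)]) (use i'2 in auto)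
    have sub: "Tphi i' \<phi> \<subseteq> Tphi i \<phi>" using i'2 by (auto simp: Tphi_def)
    then have "\<forall>v. Poly_Mapping.lookup (expo (Tphi i' \<phi>)) v \<le> Poly_Mapping.lookup (expo (Tphi i \<phi>)) v"
      using expo_le[of "Tphi i' \<phi>" "Tphi i \<phi>"] by simp
    then have le: "\<forall>v. Poly_Mapping.lookup (expo (Tphi i' \<phi>)) v \<le> Poly_Mapping.lookup e v"
      using ip(3) le_trans by meson
    have g: "m_phi i' \<phi> \<in> ?G" using mon' i'1 by (auto simp: I_def)
    then have "(monomial (expo (Tphi i' \<phi>)) :: ('p \<times> nat, 'k) mpoly) \<in> rmod.span ?G"
      using rmod.span_base[OF g] by (simp only: m_phi_expo)
    from mi[OF this le] have "x = m_phi i' \<phi>" using x(1) by (simp add: m_phi_expo)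
    then show "x \<in> {m_phi i \<phi> | i \<phi>. monotone_on {0..i} (\<le>) (\<le>) \<phi> \<and> \<phi> i \<in> I i
               \<and> (\<forall>j<i. \<phi> j \<notin> I j)}"
      using mon' i'1 i'3 by (auto simp: I_def)
  next
    fix x :: "('p \<times> nat, 'k) mpoly" assume "x \<in> {m_phi i \<phi> | i \<phi>. monotone_on {0..i} (\<le>) (\<le>) \<phi> \<and> \<phi> i \<in> I i
               \<and> (\<forall>j<i. \<phi> j \<notin> I j)}"
    then obtain i \<phi> where x: "x = m_phi i \<phi>" "monotone_on {0..i} (\<le>) (\<le>) \<phi>" "\<phi> i \<in> I i"
      "\<forall>j<i. \<phi> j \<notin> I j" by blast
    define e where "e = expo (Tphi i \<phi>)"
    have xe: "x = monomial e" using x(1) by (simp add: m_phi_expo e_def)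
    have inG: "x \<in> rmod.span ?G" using x by (auto intro: rmod.span_base)
    have "e' = e" if e': "monomial e' \<in> rmod.span ?G" "\<forall>v. Poly_Mapping.lookup e' v \<le> Poly_Mapping.lookup e v" for e'
    proof -
      from key[OF e'(1)] obtain i2 \<phi>2 where ip: "monotone_on {0..i2} (\<le>) (\<le>) \<phi>2" "\<alpha> (\<phi>2 i2) \<le> i2"
        "\<forall>v. Poly_Mapping.lookup (expo (Tphi i2 \<phi>2)) v \<le> Poly_Mapping.lookup e' v" by blast
      then have "\<forall>v. Poly_Mapping.lookup (expo (Tphi i2 \<phi>2)) v \<le> Poly_Mapping.lookup (expo (Tphi i \<phi>)) v"
        using e'(2) le_trans unfolding e_def by meson
      then have sub: "Tphi i2 \<phi>2 \<subseteq> Tphi i \<phi>" by (simp only: expo_le[OF finite_Tphi finite_Tphi])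
      have pt: "j \<le> i \<and> \<phi>2 j = \<phi> j" if "j \<le> i2" for j
      proof -
        have "(\<phi>2 j, j) \<in> Tphi i \<phi>" using sub that by (auto simp: Tphi_def)
        then show ?thesis by (auto simp: Tphi_def)
      qed
      have "i2 = i"
      proof (rule ccontr)
        assume "i2 \<noteq> i"
        with pt[of i2] have "i2 < i" by simp
        with x(4) have "\<phi> i2 \<notin> I i2" by simp
        with pt[of i2] ip(2) show False by (simp add: I_def)
      qed
      then have "Tphi i2 \<phi>2 = Tphi i \<phi>" using pt unfolding Tphi_def by (auto intro!: image_cong)
      then have "\<forall>v. Poly_Mapping.lookup e v \<le> Poly_Mapping.lookup e' v" using ip(3) e_def by simp
      with e'(2) show "e' = e" by (intro poly_mapping_eqI) (meson order_antisym)
    qed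
    then show "x \<in> min_monomial_gens (rmod.span ?G)"
      unfolding min_monomial_gens_def using xe inG by blast
  qed
  show ?thesis using L eq1 part2 by (simp add: ideal_gen_span)
qed

end
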